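(* For $n\ge0$ and $0\le x<s^n$ with base-$s$ expansion $x=x_0+x_1s+\dots+x_{n-1}s^{n-1}$ ($0\le x_k<s$) put $S_{(n,x)}=S_{x_0}S_{x_1}\cdots S_{x_{n-1}}$ and $u_{(n,x)}=u_{x_0}u_{x_1}\cdots u_{x_{n-1}}$ (empty products equal $I$). Then for all $n,m\ge0$, $0\le x<s^n$, $0\le y<s^m$: if $x=\varphi(j,x')$ and $y=\varphi(l,y')$ for some $(j,x'),(l,y')\in\mathcal V$, then $$T_S(u_{(n,x)}u_{(m,y)}^* )=S_{(n,x)}S_{(m,y)}^*+C_{(n,x),(m,y)},$$ where $C_{(n,x),(m,y)}$ is the rank-one operator with $C_{(n,x),(m,y)}E_{(k,z)}=E_{(j,x')}$ if $(k,z)=(l,y')$ and $C_{(n,x),(m,y)}E_{(k,z)}=0$ otherwise; and if $x$ or $y$ is not in the range of $\varphi$, then $T_S(u_{(n,x)}u_{(m,y)}^* )=S_{(n,x)}S_{(m,y)}^*$.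
   Context: Fix an integer $s\ge2$. Let $\mathcal V=\{(n,x): n\in\mathbb Z_{\ge0},\ x\in\mathbb Z,\ 0\le x<s^n\}$, $H=\ell^2(\mathcal V)$ with orthonormal basis $\{E_{(n,x)}\}$. $S_j$ ($0\le j\le s-1$) are the isometries on $H$ given by $S_jE_{(n,x)}=E_{(n+1,sx+j)}$. On $\ell^2(\mathbb Z)$ with standard basis $\{e_l\}_{l\in\mathbb Z}$, define isometries $u_je_l=e_{sl+j}$, $j=0,\dots,s-1$ (these satisfy the Cuntz relations $u_j^*u_k=\delta_{jk}$, $\sum_ju_ju_j^*=I$). Let $\varphi:\mathcal V\to\mathbb Z$, $\varphi(n,x)=s^n+x$ (injective), let $\iota:H\to\ell^2(\mathbb Z)$ be the isometry $\iota E_{(n,x)}=e_{\varphi(n,x)}$, and define $T_S:B(\ell^2(\mathbb Z))\to B(H)$ by $T_S(a)=\iota^*a\iota$. *)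

theory Defs
  imports "HOL-Analysis.Analysis"
begin

text \<open>Vectors of l2(X) are represented as functions X \<Rightarrow> complex; operators act on such
functions. The vertex set V is carved out of nat \<times> int.\<close>

definition Vset :: "nat \<Rightarrow> (nat \<times> int) set" where
  "Vset s = {(n, x). 0 \<le> x \<and> x < int s ^ n}"

definition l2 :: "'a set \<Rightarrow> ('a \<Rightarrow> complex) set" where
  "l2 I = {f. (\<forall>p. p \<notin> I \<longrightarrow> f p = 0) \<and> (\<lambda>p. (norm (f p))^2) summable_on I}"

definition delta :: "'a \<Rightarrow> 'a \<Rightarrow> complex" where
  "delta p = (\<lambda>q. if q = p then 1 else 0)"

text \<open>Hilbert-space adjoint of an operator A : l2(I) \<rightarrow> l2(J), computed via
  (A* g)(p) = < A e_p , g >.\<close>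
definition adj :: "'a set \<Rightarrow> 'b set \<Rightarrow> (('a \<Rightarrow> complex) \<Rightarrow> ('b \<Rightarrow> complex))
                     \<Rightarrow> ('b \<Rightarrow> complex) \<Rightarrow> ('a \<Rightarrow> complex)" where
  "adj I J A g = (\<lambda>p. if p \<in> I then infsum (\<lambda>q. cnj (A (delta p) q) * g q) J else 0)"

text \<open>S_j E_(n,x) = E_(n+1, s x + j), written out on coefficient functions.\<close>
definition Sop :: "nat \<Rightarrow> nat \<Rightarrow> ((nat \<times> int) \<Rightarrow> complex) \<Rightarrow> ((nat \<times> int) \<Rightarrow> complex)" where
  "Sop s j f = (\<lambda>(n, x). if (n, x) \<in> Vset s \<and> 0 < n \<and> x mod int s = int j
                          then f (n - 1, x div int s) else 0)"

text \<open>u_j e_l = e_(s l + j).\<close>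
definition uop :: "nat \<Rightarrow> nat \<Rightarrow> (int \<Rightarrow> complex) \<Rightarrow> (int \<Rightarrow> complex)" where
  "uop s j f = (\<lambda>l. if l mod int s = int j then f (l div int s) else 0)"

definition phi :: "nat \<Rightarrow> nat \<times> int \<Rightarrow> int" where
  "phi s p = int s ^ fst p + snd p"

text \<open>iota E_p = e_(phi p).\<close>
definition iota :: "nat \<Rightarrow> ((nat \<times> int) \<Rightarrow> complex) \<Rightarrow> (int \<Rightarrow> complex)" where
  "iota s f = (\<lambda>l. if \<exists>p\<in>Vset s. phi s p = l
                    then f (THE p. p \<in> Vset s \<and> phi s p = l) else 0)"

definition TS :: "nat \<Rightarrow> ((int \<Rightarrow> complex) \<Rightarrow> (int \<Rightarrow> complex))
                    \<Rightarrow> ((nat \<times> int) \<Rightarrow> complex) \<Rightarrow> ((nat \<times> int) \<Rightarrow> complex)" where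
  "TS s a = adj (Vset s) UNIV (iota s) \<circ> a \<circ> iota s"

definition digit :: "nat \<Rightarrow> int \<Rightarrow> nat \<Rightarrow> nat" where
  "digit s x k = nat ((x div int s ^ k) mod int s)"

definition Sword :: "nat \<Rightarrow> nat \<Rightarrow> int \<Rightarrow> ((nat \<times> int) \<Rightarrow> complex) \<Rightarrow> ((nat \<times> int) \<Rightarrow> complex)" where
  "Sword s n x = foldr (\<circ>) (map (\<lambda>k. Sop s (digit s x k)) [0..<n]) id"

definition uword :: "nat \<Rightarrow> nat \<Rightarrow> int \<Rightarrow> (int \<Rightarrow> complex) \<Rightarrow> (int \<Rightarrow> complex)" where
  "uword s n x = foldr (\<circ>) (map (\<lambda>k. uop s (digit s x k)) [0..<n]) id"

text \<open>Rank-one operator E_q \<mapsto> E_p, E_r \<mapsto> 0 for r \<noteq> q.\<close>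
definition Cop :: "'a \<Rightarrow> 'a \<Rightarrow> ('a \<Rightarrow> complex) \<Rightarrow> ('a \<Rightarrow> complex)" where
  "Cop p q f = (\<lambda>r. if r = p then f q else 0)"

end

theory Submission
  imports Defs
begin

lemma infsum_pt:
  fixes g :: "'a \<Rightarrow> complex"
  shows "infsum (\<lambda>q. (if q = p then 1 else 0) * g q) A = (if p \<in> A then g p else 0)"
proof -
  have "infsum (\<lambda>q. (if q = p then 1 else 0) * g q) A = infsum (\<lambda>q. (if q = p then 1 else 0) * g q) (A \<inter> {p})"
    by (rule infsum_cong_neutral) auto
  also have "\<dots> = (if p \<in> A then g p else 0)"
    by (cases "p \<in> A") auto
  finally show ?thesis .
qed

lemma digit_Suc: "digit s x (Suc k) = digit s (x div int s) k"
  unfolding digit_def by (simp add: zdiv_zmult2_eq power_Suc)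

lemma uword_Suc: "uword s (Suc n) x = uop s (digit s x 0) \<circ> uword s n (x div int s)"
  unfolding uword_def
  by (simp add: upt_conv_Cons map_Suc_upt[symmetric] digit_Suc comp_def del: upt_Suc)

lemma Sword_Suc: "Sword s (Suc n) x = Sop s (digit s x 0) \<circ> Sword s n (x div int s)"
  unfolding Sword_def
  by (simp add: upt_conv_Cons map_Suc_upt[symmetric] digit_Suc comp_def del: upt_Suc)

lemma modeq_split:
  fixes L x N M :: int
  assumes "N > 0" "M > 0" "0 \<le> x" "x < N * M"
  shows "(L mod (N * M) = x) \<longleftrightarrow> (L mod N = x mod N \<and> (L div N) mod M = x div N)"
proof -
  have e1: "L mod (N * M) = N * ((L div N) mod M) + L mod N" using assms zmod_zmult2_eq[of M L N] by simp
  have e2: "x = N * (x div N) + x mod N" by simp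
  show ?thesis
  proof
    assume h: "L mod (N * M) = x"
    have b: "0 \<le> L mod N" "L mod N < N" using assms by auto
    have "(N * ((L div N) mod M) + L mod N) mod N = L mod N" using b by simp
    moreover have "(N * ((L div N) mod M) + L mod N) div N = (L div N) mod M" using b assms by simp
    ultimately show "L mod N = x mod N \<and> (L div N) mod M = x div N" using h e1 by metis
  next
    assume "L mod N = x mod N \<and> (L div N) mod M = x div N"
    then show "L mod (N * M) = x" using e1 e2 by metis
  qed
qed

lemma uword_apply:
  assumes "s \<ge> 2" "0 \<le> x" "x < int s ^ n"
  shows "uword s n x g L = (if L mod int s ^ n = x then g (L div int s ^ n) else 0)"
  using assms(2,3)
proof (induction n arbitrary: x L)
  case 0
  then show ?case by (simp add: uword_def)
next
  case (Suc n)
  have s0: "int s > 0" using assms by simp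
  have x1: "0 \<le> x div int s" "x div int s < int s ^ n"
  proof -
    show "0 \<le> x div int s" using Suc.prems s0 by (simp add: pos_imp_zdiv_nonneg_iff)
    have "int s * (x div int s) \<le> x"
    proof -
      have "x = int s * (x div int s) + x mod int s" by simp
      moreover have "0 \<le> x mod int s" using s0 by simp
      ultimately show ?thesis by linarith
    qed
    also have "x < int s * int s ^ n" using Suc.prems by simp
    finally show "x div int s < int s ^ n" using s0 by simp
  qed
  have "uword s (Suc n) x g L = (if L mod int s = x mod int s then uword s n (x div int s) g (L div int s) else 0)"
    using s0 Suc.prems by (simp add: uword_Suc uop_def digit_def)
  also have "\<dots> = (if L mod int s = x mod int s then (if (L div int s) mod int s ^ n = x div int s then g (L div int s div int s ^ n) else 0) else 0)"
    using Suc.IH[OF x1] by simp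
  also have "\<dots> = (if L mod int s ^ Suc n = x then g (L div int s ^ Suc n) else 0)"
    using modeq_split[of "int s" "int s ^ n" x L] s0 Suc.prems
    by (auto simp: zdiv_zmult2_eq power_Suc)
  finally show ?case .
qed

lemma div_bound:
  fixes Z N M :: int
  assumes "N > 0" "0 \<le> Z" "Z < N * M"
  shows "0 \<le> Z div N" "Z div N < M"
proof -
  show "0 \<le> Z div N" using assms by (simp add: pos_imp_zdiv_nonneg_iff)
  have "N * (Z div N) \<le> Z"
  proof -
    have "Z = N * (Z div N) + Z mod N" by simp
    moreover have "0 \<le> Z mod N" using assms by simp
    ultimately show ?thesis by linarith
  qed
  also have "Z < N * M" by fact
  finally show "Z div N < M" using assms by simp
qed

lemma Sword_apply:
  assumes "s \<ge> 2" "0 \<le> x" "x < int s ^ n" "(K, Z) \<in> Vset s"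
  shows "Sword s n x h (K, Z) = (if n \<le> K \<and> Z mod int s ^ n = x then h (K - n, Z div int s ^ n) else 0)"
  using assms(2,3,4)
proof (induction n arbitrary: x K Z)
  case 0
  then show ?case by (simp add: Sword_def)
next
  case (Suc n)
  have s0: "int s > 0" using assms by simp
  have x1: "0 \<le> x div int s" "x div int s < int s ^ n"
    using div_bound[of "int s" x "int s ^ n"] Suc.prems s0 by auto
  show ?case
  proof (cases "0 < K")
    case False
    then have "K = 0" by simp
    then show ?thesis by (simp add: Sword_Suc Sop_def)
  next
    case True
    have ZV: "0 \<le> Z" "Z < int s * int s ^ (K - 1)"
    proof -
      obtain K' where K': "K = Suc K'" using True by (cases K) auto
      have e: "int s ^ K = int s * int s ^ (K - 1)" unfolding K' by simp
      have "0 \<le> Z \<and> Z < int s ^ K" using Suc.prems(3) by (simp add: Vset_def)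
      then show "0 \<le> Z" "Z < int s * int s ^ (K - 1)" using e by linarith+
    qed
    have V1: "(K - 1, Z div int s) \<in> Vset s"
      using div_bound[OF s0 ZV] by (simp add: Vset_def)
    have "Sword s (Suc n) x h (K, Z) = (if Z mod int s = x mod int s then Sword s n (x div int s) h (K - 1, Z div int s) else 0)"
      using s0 Suc.prems(3) True by (simp add: Sword_Suc Sop_def digit_def)
    also have "\<dots> = (if Z mod int s = x mod int s then (if n \<le> K - 1 \<and> (Z div int s) mod int s ^ n = x div int s then h (K - 1 - n, Z div int s div int s ^ n) else 0) else 0)"
      using Suc.IH[OF x1 V1] by simp
    also have "\<dots> = (if Suc n \<le> K \<and> Z mod int s ^ Suc n = x then h (K - Suc n, Z div int s ^ Suc n) else 0)"
      using modeq_split[of "int s" "int s ^ n" x Z] s0 Suc.prems True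
      by (auto simp: zdiv_zmult2_eq power_Suc)
    finally show ?thesis .
  qed
qed

lemma Sword_out:
  assumes "\<And>r. r \<notin> Vset s \<Longrightarrow> h r = 0" "r \<notin> Vset s"
  shows "Sword s n x h r = 0"
proof (cases n)
  case 0
  then show ?thesis using assms by (simp add: Sword_def)
next
  case (Suc k)
  then show ?thesis using assms(2) by (cases r) (simp add: Sword_Suc Sop_def)
qed

lemma phi_bounds:
  assumes "s \<ge> 2" "(a, b) \<in> Vset s"
  shows "int s ^ a \<le> phi s (a, b)" "phi s (a, b) < int s ^ Suc a"
proof -
  show "int s ^ a \<le> phi s (a, b)" using assms by (simp add: phi_def Vset_def)
  have "phi s (a, b) < 2 * int s ^ a" using assms by (simp add: phi_def Vset_def)
  also have "\<dots> \<le> int s * int s ^ a" using assms by (intro mult_right_mono) auto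
  finally show "phi s (a, b) < int s ^ Suc a" by simp
qed

lemma phi_inj:
  assumes "s \<ge> 2" "p \<in> Vset s" "q \<in> Vset s" "phi s p = phi s q"
  shows "p = q"
proof -
  obtain a b c d where p: "p = (a, b)" and q: "q = (c, d)" by (cases p, cases q) auto
  have s1: "int s > 1" using assms by simp
  have "a = c"
  proof (rule ccontr)
    assume "a \<noteq> c"
    then consider "Suc a \<le> c" | "Suc c \<le> a" by linarith
    then show False
    proof cases
      case 1
      have "phi s p < int s ^ Suc a" using phi_bounds(2)[OF assms(1), of a b] assms(2) p by simp
      also have "\<dots> \<le> int s ^ c" using 1 s1 by (intro power_increasing) auto
      also have "\<dots> \<le> phi s q" using phi_bounds(1)[OF assms(1), of c d] assms(3) q by simp
      finally show False using assms by simp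
    next
      case 2
      have "phi s q < int s ^ Suc c" using phi_bounds(2)[OF assms(1), of c d] assms(3) q by simp
      also have "\<dots> \<le> int s ^ a" using 2 s1 by (intro power_increasing) auto
      also have "\<dots> \<le> phi s p" using phi_bounds(1)[OF assms(1), of a b] assms(2) p by simp
      finally show False using assms by simp
    qed
  qed
  then show ?thesis using assms p q by (simp add: phi_def)
qed

lemma iota_phi:
  assumes "s \<ge> 2" "p \<in> Vset s"
  shows "iota s f (phi s p) = f p"
proof -
  have "(THE q. q \<in> Vset s \<and> phi s q = phi s p) = p"
    using assms phi_inj[OF assms(1)] by (intro the_equality) auto
  then show ?thesis using assms unfolding iota_def by auto
qed

lemma iota_notin:
  assumes "\<not> (\<exists>p\<in>Vset s. phi s p = M)"
  shows "iota s f M = 0"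
  using assms unfolding iota_def by auto

lemma iota_delta:
  assumes "s \<ge> 2" "r \<in> Vset s"
  shows "iota s (delta r) M = (if M = phi s r then 1 else 0)"
proof (cases "\<exists>p\<in>Vset s. phi s p = M")
  case True
  then obtain p where p: "p \<in> Vset s" "phi s p = M" by auto
  then have "iota s (delta r) M = delta r p" using iota_phi[OF assms(1) p(1)] by simp
  then show ?thesis using p phi_inj[OF assms(1) p(1) assms(2)] by (auto simp: delta_def)
next
  case False
  then show ?thesis using iota_notin[OF False] assms by auto
qed

lemma adj_iota:
  assumes "s \<ge> 2" "r \<in> Vset s"
  shows "adj (Vset s) UNIV (iota s) g r = g (phi s r)"
proof -
  have "(\<lambda>q. cnj (iota s (delta r) q) * g q) = (\<lambda>q. (if q = phi s r then 1 else 0) * g q)"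
    using assms by (intro ext) (auto simp: iota_delta)
  then show ?thesis using assms by (simp add: adj_def infsum_pt)
qed

lemma adj_iota_out:
  assumes "r \<notin> Vset s"
  shows "adj (Vset s) UNIV (iota s) g r = 0"
  using assms by (simp add: adj_def)

lemma uword_delta:
  assumes "s \<ge> 2" "0 \<le> y" "y < int s ^ m"
  shows "uword s m y (delta L) q = (if q = int s ^ m * L + y then 1 else 0)"
proof -
  have sp: "int s ^ m > 0" using assms by simp
  have "(q mod int s ^ m = y \<and> q div int s ^ m = L) \<longleftrightarrow> q = int s ^ m * L + y"
  proof
    assume "q mod int s ^ m = y \<and> q div int s ^ m = L"
    then show "q = int s ^ m * L + y" by (metis mult_div_mod_eq)
  next
    assume h: "q = int s ^ m * L + y"
    then show "q mod int s ^ m = y \<and> q div int s ^ m = L" using assms sp by simp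
  qed
  then show ?thesis using uword_apply[OF assms] by (auto simp: delta_def)
qed

lemma adj_uword:
  assumes "s \<ge> 2" "0 \<le> y" "y < int s ^ m"
  shows "adj UNIV UNIV (uword s m y) h L = h (int s ^ m * L + y)"
proof -
  have "(\<lambda>q. cnj (uword s m y (delta L) q) * h q) = (\<lambda>q. (if q = int s ^ m * L + y then 1 else 0) * h q)"
    using assms by (intro ext) (auto simp: uword_delta)
  then show ?thesis using assms by (simp add: adj_def infsum_pt)
qed

lemma Vset_pt:
  assumes "s \<ge> 2" "0 \<le> y" "y < int s ^ m" "(a, b) \<in> Vset s"
  shows "(m + a, int s ^ m * b + y) \<in> Vset s"
proof -
  have b: "0 \<le> b" "b + 1 \<le> int s ^ a" using assms(4) by (auto simp: Vset_def)
  have sp: "int s ^ m > 0" using assms by simp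
  have "0 \<le> int s ^ m * b + y" using b sp assms by simp
  moreover have "int s ^ m * b + y < int s ^ m * (b + 1)" using assms by (simp add: algebra_simps)
  moreover have "int s ^ m * (b + 1) \<le> int s ^ m * int s ^ a" using b sp by (intro mult_left_mono) auto
  ultimately show ?thesis by (simp add: Vset_def power_add)
qed

lemma Sword_delta:
  assumes "s \<ge> 2" "0 \<le> y" "y < int s ^ m" "q \<in> Vset s"
  shows "Sword s m y (delta (a, b)) q = (if q = (m + a, int s ^ m * b + y) then 1 else 0)"
proof -
  obtain K Z where q: "q = (K, Z)" by (cases q) auto
  have sp: "int s ^ m > 0" using assms by simp
  have "(m \<le> K \<and> Z mod int s ^ m = y \<and> K - m = a \<and> Z div int s ^ m = b) \<longleftrightarrow> (K = m + a \<and> Z = int s ^ m * b + y)"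
  proof
    assume h: "m \<le> K \<and> Z mod int s ^ m = y \<and> K - m = a \<and> Z div int s ^ m = b"
    then show "K = m + a \<and> Z = int s ^ m * b + y" by (metis le_add_diff_inverse mult_div_mod_eq)
  next
    assume h: "K = m + a \<and> Z = int s ^ m * b + y"
    then show "m \<le> K \<and> Z mod int s ^ m = y \<and> K - m = a \<and> Z div int s ^ m = b" using assms sp by simp
  qed
  then show ?thesis using Sword_apply[OF assms(1,2,3), of K Z] assms(4) q by (auto simp: delta_def)
qed

lemma adj_Sword:
  assumes "s \<ge> 2" "0 \<le> y" "y < int s ^ m" "(a, b) \<in> Vset s"
  shows "adj (Vset s) (Vset s) (Sword s m y) f (a, b) = f (m + a, int s ^ m * b + y)"
proof -
  have "infsum (\<lambda>q. cnj (Sword s m y (delta (a, b)) q) * f q) (Vset s)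
      = infsum (\<lambda>q. (if q = (m + a, int s ^ m * b + y) then 1 else 0) * f q) (Vset s)"
    by (rule infsum_cong) (auto simp: Sword_delta[OF assms(1,2,3)])
  also have "\<dots> = f (m + a, int s ^ m * b + y)"
    using Vset_pt[OF assms] by (simp add: infsum_pt)
  finally show ?thesis using assms(4) by (simp add: adj_def)
qed

lemma main_pt:
  assumes s2: "s \<ge> 2" and nx: "(n, x) \<in> Vset s" and my: "(m, y) \<in> Vset s" and r: "(K, Z) \<in> Vset s"
  shows "TS s (uword s n x \<circ> adj UNIV UNIV (uword s m y)) f (K, Z)
       = (Sword s n x \<circ> adj (Vset s) (Vset s) (Sword s m y)) f (K, Z)
         + (if phi s (K, Z) = x then iota s f y else 0)"
proof -
  have x0: "0 \<le> x" "x < int s ^ n" using nx by (auto simp: Vset_def)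
  have y0: "0 \<le> y" "y < int s ^ m" using my by (auto simp: Vset_def)
  have Z0: "0 \<le> Z" "Z < int s ^ K" using r by (auto simp: Vset_def)
  have sn: "int s ^ n > 0" using s2 by simp
  have s1: "int s > 1" using s2 by simp
  let ?P = "phi s (K, Z)"
  have L: "TS s (uword s n x \<circ> adj UNIV UNIV (uword s m y)) f (K, Z)
     = (if ?P mod int s ^ n = x then iota s f (int s ^ m * (?P div int s ^ n) + y) else 0)"
    using r s2 x0 y0 by (simp add: TS_def adj_iota uword_apply adj_uword)
  have R: "(Sword s n x \<circ> adj (Vset s) (Vset s) (Sword s m y)) f (K, Z)
     = (if n \<le> K \<and> Z mod int s ^ n = x then adj (Vset s) (Vset s) (Sword s m y) f (K - n, Z div int s ^ n) else 0)"
    using Sword_apply[OF s2 x0 r] by simp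
  show ?thesis
  proof (cases "n \<le> K")
    case True
    have e: "int s ^ K = int s ^ n * int s ^ (K - n)" using True by (simp add: power_add[symmetric])
    have P: "?P = int s ^ n * int s ^ (K - n) + Z" using e by (simp add: phi_def)
    have Pm: "?P mod int s ^ n = Z mod int s ^ n" unfolding P by simp
    have Pd: "?P div int s ^ n = int s ^ (K - n) + Z div int s ^ n" unfolding P using sn by simp
    have Zb: "0 \<le> Z div int s ^ n" "Z div int s ^ n < int s ^ (K - n)"
      using div_bound[OF sn Z0(1)] Z0(2) e by auto
    have V: "(K - n, Z div int s ^ n) \<in> Vset s" using Zb by (simp add: Vset_def)
    have pe: "int s ^ m * (?P div int s ^ n) + y = phi s (m + (K - n), int s ^ m * (Z div int s ^ n) + y)"
      unfolding Pd by (simp add: phi_def power_add algebra_simps)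
    have ne: "?P \<noteq> x"
    proof -
      have "int s ^ n \<le> int s ^ K" using True s1 by (intro power_increasing) auto
      also have "\<dots> \<le> ?P" using Z0 by (simp add: phi_def)
      finally show ?thesis using x0 by auto
    qed
    show ?thesis
      unfolding L R Pm pe
      using True ne iota_phi[OF s2 Vset_pt[OF s2 y0 V]] adj_Sword[OF s2 y0 V] by simp
  next
    case False
    have P0: "0 \<le> ?P" using Z0 by (simp add: phi_def)
    have "?P < int s ^ Suc K" using phi_bounds(2)[OF s2 r] .
    also have "\<dots> \<le> int s ^ n" using False s1 by (intro power_increasing) auto
    finally have P1: "?P < int s ^ n" .
    have Pm: "?P mod int s ^ n = ?P" using P0 P1 by simp
    have Pd: "?P div int s ^ n = 0" using P0 P1 by simp
    show ?thesis unfolding L R Pm Pd using False by simp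
  qed
qed

lemma main_out:
  assumes s2: "s \<ge> 2" and r: "r \<notin> Vset s"
  shows "TS s (uword s n x \<circ> adj UNIV UNIV (uword s m y)) f r = 0"
    "(Sword s n x \<circ> adj (Vset s) (Vset s) (Sword s m y)) f r = 0"
proof -
  show "TS s (uword s n x \<circ> adj UNIV UNIV (uword s m y)) f r = 0"
    using r by (simp add: TS_def adj_iota_out)
  show "(Sword s n x \<circ> adj (Vset s) (Vset s) (Sword s m y)) f r = 0"
    using Sword_out[OF _ r] by (simp add: adj_def)
qed

theorem proposition6p4:
  fixes s n m :: nat and x y :: int
  assumes "s \<ge> 2" and "(n, x) \<in> Vset s" and "(m, y) \<in> Vset s"
  shows "(\<forall>j x' l y'. (j, x') \<in> Vset s \<and> (l, y') \<in> Vset s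
            \<and> x = phi s (j, x') \<and> y = phi s (l, y') \<longrightarrow>
            (\<forall>f \<in> l2 (Vset s).
               TS s (uword s n x \<circ> adj UNIV UNIV (uword s m y)) f
               = (\<lambda>r. (Sword s n x \<circ> adj (Vset s) (Vset s) (Sword s m y)) f r
                      + Cop (j, x') (l, y') f r)))
       \<and> ((\<not> (\<exists>p \<in> Vset s. phi s p = x) \<or> \<not> (\<exists>p \<in> Vset s. phi s p = y)) \<longrightarrow>
            (\<forall>f \<in> l2 (Vset s).
               TS s (uword s n x \<circ> adj UNIV UNIV (uword s m y)) f
               = (Sword s n x \<circ> adj (Vset s) (Vset s) (Sword s m y)) f))"
proof (intro conjI allI impI ballI)
  fix j x' l y' f
  assume h: "(j, x') \<in> Vset s \<and> (l, y') \<in> Vset s \<and> x = phi s (j, x') \<and> y = phi s (l, y')"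
  show "TS s (uword s n x \<circ> adj UNIV UNIV (uword s m y)) f
       = (\<lambda>r. (Sword s n x \<circ> adj (Vset s) (Vset s) (Sword s m y)) f r + Cop (j, x') (l, y') f r)"
  proof
    fix r
    show "TS s (uword s n x \<circ> adj UNIV UNIV (uword s m y)) f r
       = (Sword s n x \<circ> adj (Vset s) (Vset s) (Sword s m y)) f r + Cop (j, x') (l, y') f r"
    proof (cases "r \<in> Vset s")
      case True
      obtain K Z where rr: "r = (K, Z)" by (cases r) auto
      have "(phi s (K, Z) = x) = ((K, Z) = (j, x'))"
        using phi_inj[OF assms(1) True[unfolded rr]] h by auto
      moreover have "iota s f y = f (l, y')" using h iota_phi[OF assms(1)] by simp
      ultimately show ?thesis
        using main_pt[OF assms True[unfolded rr], of f] rr by (simp add: Cop_def)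
    next
      case False
      then have "r \<noteq> (j, x')" using h by auto
      then show ?thesis using main_out[OF assms(1) False] by (simp add: Cop_def)
    qed
  qed
next
  fix f
  assume h: "\<not> (\<exists>p \<in> Vset s. phi s p = x) \<or> \<not> (\<exists>p \<in> Vset s. phi s p = y)"
  show "TS s (uword s n x \<circ> adj UNIV UNIV (uword s m y)) f
       = (Sword s n x \<circ> adj (Vset s) (Vset s) (Sword s m y)) f"
  proof
    fix r
    show "TS s (uword s n x \<circ> adj UNIV UNIV (uword s m y)) f r
       = (Sword s n x \<circ> adj (Vset s) (Vset s) (Sword s m y)) f r"
    proof (cases "r \<in> Vset s")
      case True
      obtain K Z where rr: "r = (K, Z)" by (cases r) auto
      have "(if phi s (K, Z) = x then iota s f y else 0) = 0"
        using h True rr iota_notin[of s y f] by auto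
      then show ?thesis using main_pt[OF assms True[unfolded rr], of f] rr by simp
    next
      case False
      then show ?thesis using main_out[OF assms(1) False] by simp
    qed
  qed
qed

end
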